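(* Let $G=G(I,P;E)$ be a pinned graph and $\mathbf p$ a configuration in $\mathbb R^2$ such that the pinned framework $G(\mathbf p)$ is an independent 1-DOF linkage, and let $d$ be a driver of $G(\mathbf p)$ which is active. Then the driver replacement $\overline G(\mathbf p)$ is an isostatic pinned framework (and hence $\overline G$ is a pinned isostatic graph).
   Context: A pinned graph $G(I,P;E)$ has inner vertices $I$, pinned vertices $P$, and edges $E$ each with at least one endpoint in $I$. In the pinned framework $G(\mathbf p)$ the pinned vertices are fixed; a first-order motion assigns $\mathbf p'_i\in\mathbb R^2$ to inner vertices ($\mathbf p'_v=\mathbf 0$ for $v\in P$) with $(\mathbf p_i-\mathbf p_j)\cdot(\mathbf p'_i-\mathbf p'_j)=0$ for every edge $ij$; a self-stress is an assignment of scalars $\lambda_{ij}$ to edges with $\sum_{j:ij\in E}\lambda_{ij}(\mathbf p_i-\mathbf p_j)=\mathbf 0$ at each inner vertex. $G(\mathbf p)$ is independent if its only self-stress is zero; it is an independent 1-DOF linkage if it is independent and its space of first-order motions is one-dimensional (so $|E|=2|I|-1$); it is isostatic if it is independent and has only the zero first-order motion. A driver of a 1-DOF linkage is one of: (a) a piston on a pair of vertices $a,b$; (b) an angle driver on an angle $\angle abc$ formed by edges $ab,bc$ at an inner vertex $b$ of degree $\ge3$; (c) an angle driver on an angle $\angle abc$ formed by edges $ab,bc$ at an inner vertex $b$ of degree $2$; (d) an angle driver on an angle $\angle a p_i p_j$ where $p_i,p_j\in P$, $a\in I$ and $ap_i\in E$. The brace pair of the driver is $\{a,b\}$ in case (a),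 $\{a,c\}$ in cases (b),(c), and $\{a,p_j\}$ in case (d). The driver is active at $G(\mathbf p)$ if for a non-zero first-order motion $\mathbf p'$, the brace pair $\{x,y\}$ has non-zero strain: $(\mathbf p_x-\mathbf p_y)\cdot(\mathbf p'_x-\mathbf p'_y)\ne 0$ (equivalently, after appending the row of the brace pair to the rigidity matrix, the system $R\mathbf p'=(0,\dots,0,s_d)^T$ is solvable for every $s_d$). The driver replacement $\overline G$ is: in case (a), $G$ plus the bar $ab$; in case (b), $G$ plus the bar $ac$; in case (c), $G$ plus the bar $ac$ with the vertex $b$ and its two edges removed; in case (d), $G$ with $a$ made into an additional pinned vertex (edges between pinned vertices being discarded). $\overline G(\mathbf p)$ uses the same positions $\mathbf p$. A pinned isostatic graph is one satisfying $|E|=2|I|$ and, for every subgraph $G'(I',P';E')$ with $E'\neq\emptyset$: $|E'|\le 2|I'|$ if $|P'|\ge 2$, $|E'|\le2|I'|-1$ if $|P'|=1$, $|E'|\le 2|I'|-3$ if $P'=\emptyset$. *)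

theory Defs
  imports "HOL-Analysis.Analysis"
begin

definition pinned_graph :: "'v set \<Rightarrow> 'v set \<Rightarrow> 'v set set \<Rightarrow> bool" where
  "pinned_graph I P E \<longleftrightarrow> finite I \<and> finite P \<and> I \<inter> P = {} \<and>
     (\<forall>e\<in>E. \<exists>a b. e = {a, b} \<and> a \<noteq> b \<and> a \<in> I \<and> b \<in> I \<union> P)"

type_synonym 'v config = "'v \<Rightarrow> real^2"

definition first_order_motion ::
  "'v set \<Rightarrow> 'v set \<Rightarrow> 'v set set \<Rightarrow> 'v config \<Rightarrow> 'v config \<Rightarrow> bool" where
  "first_order_motion I P E p q \<longleftrightarrow> (\<forall>v. v \<notin> I \<longrightarrow> q v = 0) \<and>
     (\<forall>i j. {i, j} \<in> E \<longrightarrow> (p i - p j) \<bullet> (q i - q j) = 0)"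

definition self_stress ::
  "'v set \<Rightarrow> 'v set \<Rightarrow> 'v set set \<Rightarrow> 'v config \<Rightarrow> ('v set \<Rightarrow> real) \<Rightarrow> bool" where
  "self_stress I P E p lam \<longleftrightarrow>
     (\<forall>i\<in>I. (\<Sum>j\<in>{j. {i, j} \<in> E}. lam {i, j} *\<^sub>R (p i - p j)) = 0)"

definition independent_fw :: "'v set \<Rightarrow> 'v set \<Rightarrow> 'v set set \<Rightarrow> 'v config \<Rightarrow> bool" where
  "independent_fw I P E p \<longleftrightarrow>
     (\<forall>lam. self_stress I P E p lam \<longrightarrow> (\<forall>e\<in>E. lam e = 0))"

definition one_dof :: "'v set \<Rightarrow> 'v set \<Rightarrow> 'v set set \<Rightarrow> 'v config \<Rightarrow> bool" where
  "one_dof I P E p \<longleftrightarrow> (\<exists>m. first_order_motion I P E p m \<and> m \<noteq> (\<lambda>_. 0) \<and>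
     (\<forall>q. first_order_motion I P E p q \<longrightarrow> (\<exists>c::real. q = (\<lambda>v. c *\<^sub>R m v))))"

definition independent_1dof_linkage :: "'v set \<Rightarrow> 'v set \<Rightarrow> 'v set set \<Rightarrow> 'v config \<Rightarrow> bool" where
  "independent_1dof_linkage I P E p \<longleftrightarrow> independent_fw I P E p \<and> one_dof I P E p"

definition isostatic_fw :: "'v set \<Rightarrow> 'v set \<Rightarrow> 'v set set \<Rightarrow> 'v config \<Rightarrow> bool" where
  "isostatic_fw I P E p \<longleftrightarrow> independent_fw I P E p \<and>
     (\<forall>q. first_order_motion I P E p q \<longrightarrow> q = (\<lambda>_. 0))"

text \<open>Drivers: (a) piston on a b; (b)/(c) angle driver on angle a b c at inner b
  (case (b) if deg b \<ge> 3, case (c) if deg b = 2); (d) angle a p_i p_j.\<close>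

datatype 'v driver = Piston 'v 'v | AngleDriver 'v 'v 'v | PinAngleDriver 'v 'v 'v

definition degree :: "'v set set \<Rightarrow> 'v \<Rightarrow> nat" where
  "degree E v = card {e\<in>E. v \<in> e}"

fun is_driver :: "'v set \<Rightarrow> 'v set \<Rightarrow> 'v set set \<Rightarrow> 'v driver \<Rightarrow> bool" where
  "is_driver I P E (Piston a b) \<longleftrightarrow> a \<in> I \<union> P \<and> b \<in> I \<union> P \<and> a \<noteq> b"
| "is_driver I P E (AngleDriver a b c) \<longleftrightarrow> b \<in> I \<and> {a, b} \<in> E \<and> {b, c} \<in> E \<and> a \<noteq> c
     \<and> degree E b \<ge> 2"
| "is_driver I P E (PinAngleDriver a q_i q_j) \<longleftrightarrow> a \<in> I \<and> q_i \<in> P \<and> q_j \<in> P \<and> q_i \<noteq> q_j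
     \<and> {a, q_i} \<in> E"

fun brace_pair :: "'v driver \<Rightarrow> 'v \<times> 'v" where
  "brace_pair (Piston a b) = (a, b)"
| "brace_pair (AngleDriver a b c) = (a, c)"
| "brace_pair (PinAngleDriver a q_i q_j) = (a, q_j)"

definition active_driver ::
  "'v set \<Rightarrow> 'v set \<Rightarrow> 'v set set \<Rightarrow> 'v config \<Rightarrow> 'v driver \<Rightarrow> bool" where
  "active_driver I P E p d \<longleftrightarrow> (case brace_pair d of (x, y) \<Rightarrow>
     (\<exists>q. first_order_motion I P E p q \<and> q \<noteq> (\<lambda>_. 0) \<and>
          (p x - p y) \<bullet> (q x - q y) \<noteq> 0))"

fun driver_replacement ::
  "'v set \<Rightarrow> 'v set \<Rightarrow> 'v set set \<Rightarrow> 'v driver \<Rightarrow> 'v set \<times> 'v set \<times> 'v set set" where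
  "driver_replacement I P E (Piston a b) = (I, P, insert {a, b} E)"
| "driver_replacement I P E (AngleDriver a b c) =
     (if degree E b = 2
      then (I - {b}, P, insert {a, c} {e\<in>E. b \<notin> e})
      else (I, P, insert {a, c} E))"
| "driver_replacement I P E (PinAngleDriver a q_i q_j) =
     (I - {a}, insert a P, {e\<in>E. \<not> e \<subseteq> insert a P})"

definition pinned_isostatic_graph :: "'v set \<Rightarrow> 'v set \<Rightarrow> 'v set set \<Rightarrow> bool" where
  "pinned_isostatic_graph I P E \<longleftrightarrow> int (card E) = 2 * int (card I) \<and>
     (\<forall>I' P' E'. I' \<subseteq> I \<longrightarrow> P' \<subseteq> P \<longrightarrow> E' \<subseteq> E \<longrightarrow> E' \<noteq> {} \<longrightarrow>
        (\<forall>e\<in>E'. e \<subseteq> I' \<union> P') \<longrightarrow>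
        (card P' \<ge> 2 \<longrightarrow> int (card E') \<le> 2 * int (card I')) \<and>
        (card P' = 1 \<longrightarrow> int (card E') \<le> 2 * int (card I') - 1) \<and>
        (P' = {} \<longrightarrow> int (card E') \<le> 2 * int (card I') - 3))"

end

theory Submission
  imports Defs "HOL-Library.Function_Algebras"
begin

definition sc :: "real \<Rightarrow> ('x \<Rightarrow> 'b::real_vector) \<Rightarrow> ('x \<Rightarrow> 'b)" where
  "sc c f = (\<lambda>x. c *\<^sub>R f x)"

lemma vs_sc: "vector_space (sc :: real \<Rightarrow> ('x \<Rightarrow> 'b::real_vector) \<Rightarrow> ('x \<Rightarrow> 'b))"
  unfolding vector_space_def sc_def
  by (auto simp: fun_eq_iff algebra_simps)

lemma sum_fun_apply: "finite A \<Longrightarrow> (\<Sum>k\<in>A. f k) x = (\<Sum>k\<in>A. f k x)"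
  by (induction A rule: finite_induct) auto

lemma sc_apply[simp]: "sc c f x = c *\<^sub>R f x" by (simp add: sc_def)

lemma family_bound:
  fixes f :: "'k \<Rightarrow> ('x \<Rightarrow> 'b::real_vector)"
  assumes K: "finite K"
    and ind: "\<And>c. (\<Sum>k\<in>K. sc (c k) (f k)) = 0 \<Longrightarrow> \<forall>k\<in>K. c k = 0"
    and sp: "f ` K \<subseteq> module.span sc T" and T: "finite T"
  shows "card K \<le> card T"
proof -
  interpret V: vector_space "sc :: real \<Rightarrow> ('x \<Rightarrow> 'b) \<Rightarrow> _" by (rule vs_sc)
  have inj: "inj_on f K"
  proof (rule inj_onI, rule ccontr)
    fix k1 k2 assume k: "k1 \<in> K" "k2 \<in> K" "f k1 = f k2" "k1 \<noteq> k2"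
    define c where "c = (\<lambda>k. if k = k1 then (1::real) else if k = k2 then -1 else 0)"
    have "(\<Sum>k\<in>K. sc (c k) (f k)) = (\<Sum>k\<in>{k1,k2}. sc (c k) (f k))"
      by (rule sum.mono_neutral_right) (use K k in \<open>auto simp: c_def sc_def fun_eq_iff\<close>)
    also have "\<dots> = 0" using k by (simp add: c_def sc_def fun_eq_iff)
    finally have "\<forall>k\<in>K. c k = 0" by (rule ind)
    with k show False by (auto simp: c_def)
  qed
  have "V.independent (f ` K)"
  proof (rule V.independent_if_scalars_zero)
    show "finite (f ` K)" using K by simp
    fix g x assume s: "(\<Sum>x\<in>f ` K. sc (g x) x) = 0" and x: "x \<in> f ` K"
    have "(\<Sum>k\<in>K. sc (g (f k)) (f k)) = 0" using s by (simp add: sum.reindex[OF inj])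
    then have "\<forall>k\<in>K. g (f k) = 0" by (rule ind)
    with x show "g x = 0" by auto
  qed
  from V.independent_span_bound[OF T this sp] have "card (f ` K) \<le> card T" by simp
  with inj show ?thesis by (simp add: card_image)
qed

definition dE :: "'e \<Rightarrow> 'e \<Rightarrow> real" where "dE e = (\<lambda>x. if x = e then 1 else 0)"
definition dV :: "'v \<Rightarrow> 2 \<Rightarrow> 'v \<Rightarrow> real^2" where
  "dV i k = (\<lambda>v. if v = i then axis k 1 else 0)"

lemma span_edges:
  fixes g :: "'e \<Rightarrow> real"
  assumes E: "finite E" and g: "\<And>e. e \<notin> E \<Longrightarrow> g e = 0"
  shows "g \<in> module.span sc (dE ` E)"
proof -
  interpret V: vector_space "sc :: real \<Rightarrow> ('e \<Rightarrow> real) \<Rightarrow> _" by (rule vs_sc)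
  have "g = (\<Sum>e\<in>E. sc (g e) (dE e))"
  proof
    fix x
    show "g x = (\<Sum>e\<in>E. sc (g e) (dE e)) x"
      using E g by (auto simp: sum_fun_apply dE_def sc_def if_distrib cong: if_cong)
  qed
  also have "\<dots> \<in> V.span (dE ` E)"
    by (intro V.span_sum V.span_scale V.span_base) auto
  finally show ?thesis .
qed

lemma vec2_expand: "(\<Sum>k\<in>UNIV. (x $ k) *\<^sub>R axis k (1::real)) = (x::real^2)"
  by (simp add: vec_eq_iff forall_2 sum_2 axis_def)

lemma span_verts:
  fixes g :: "'v \<Rightarrow> real^2"
  assumes I: "finite I" and g: "\<And>v. v \<notin> I \<Longrightarrow> g v = 0"
  shows "g \<in> module.span sc ((\<lambda>(i,k). dV i k) ` (I \<times> UNIV))"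
proof -
  interpret V: vector_space "sc :: real \<Rightarrow> ('v \<Rightarrow> real^2) \<Rightarrow> _" by (rule vs_sc)
  have "g = (\<Sum>(i,k)\<in>I \<times> UNIV. sc (g i $ k) (dV i k))"
  proof
    fix x
    have "(\<Sum>(i,k)\<in>I \<times> UNIV. sc (g i $ k) (dV i k)) x = (\<Sum>i\<in>I. \<Sum>k\<in>UNIV. (g i $ k) *\<^sub>R dV i k x)"
      using I by (simp add: sum_fun_apply sum.cartesian_product split_beta)
    also have "\<dots> = (\<Sum>i\<in>I. if i = x then g x else 0)"
      by (rule sum.cong) (auto simp: dV_def vec2_expand)
    also have "\<dots> = g x" using I g by auto
    finally show "g x = (\<Sum>(i,k)\<in>I \<times> UNIV. sc (g i $ k) (dV i k)) x" by simp
  qed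
  also have "\<dots> \<in> V.span ((\<lambda>(i,k). dV i k) ` (I \<times> UNIV))"
    apply (intro V.span_sum)
    apply clarsimp
    apply (rule V.span_scale)
    apply (rule V.span_base)
    by force
  finally show ?thesis .
qed

lemma card_dV: "finite I \<Longrightarrow> card ((\<lambda>(i,k). dV i k) ` (I \<times> (UNIV::2 set))) \<le> 2 * card I"
proof -
  assume I: "finite I"
  have "card ((\<lambda>(i,k). dV i k) ` (I \<times> (UNIV::2 set))) \<le> card (I \<times> (UNIV::2 set))"
    using I by (intro card_image_le) simp
  also have "\<dots> = 2 * card I" by (simp add: card_cartesian_product)
  finally show ?thesis .
qed

definition frc :: "'v set set \<Rightarrow> 'v config \<Rightarrow> ('v set \<Rightarrow> real) \<Rightarrow> 'v \<Rightarrow> real^2" where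
  "frc E p lam i = (\<Sum>j\<in>{j. {i, j} \<in> E}. lam {i, j} *\<^sub>R (p i - p j))"

definition strV :: "'v set \<Rightarrow> 'v config \<Rightarrow> 'v config \<Rightarrow> 'v set \<Rightarrow> real" where
  "strV V p q e = (\<Sum>v\<in>V. \<Sum>j\<in>V. if e = {v, j} then q v \<bullet> (p v - p j) else 0)"

lemma str_pair:
  assumes V: "finite V" "a \<in> V" "b \<in> V" "a \<noteq> b"
  shows "strV V p q {a,b} = (p a - p b) \<bullet> (q a - q b)"
proof -
  have "\<And>v. (\<Sum>j\<in>V. if {a,b} = {v, j} then q v \<bullet> (p v - p j) else 0)
      = (if v = a then q a \<bullet> (p a - p b) else if v = b then q b \<bullet> (p b - p a) else 0)"
    using V by (auto simp: doubleton_eq_iff)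
  then have "strV V p q {a,b} = (\<Sum>v\<in>V. if v = a then q a \<bullet> (p a - p b) else if v = b then q b \<bullet> (p b - p a) else 0)"
    by (simp add: strV_def)
  also have "\<dots> = (\<Sum>v\<in>V. (if v = a then q a \<bullet> (p a - p b) else 0) + (if v = b then q b \<bullet> (p b - p a) else 0))"
    using V by (intro sum.cong) auto
  also have "\<dots> = q a \<bullet> (p a - p b) + q b \<bullet> (p b - p a)"
    using V by (simp add: sum.distrib)
  finally show ?thesis by (simp add: algebra_simps inner_commute)
qed

lemma frc_V:
  assumes "finite V" "\<Union>E \<subseteq> V"
  shows "frc E p lam v = (\<Sum>j\<in>V. if {v,j} \<in> E then lam {v,j} *\<^sub>R (p v - p j) else 0)"
proof -
  have "{j. {v,j} \<in> E} = {j\<in>V. {v,j} \<in> E}" using assms by auto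
  then show ?thesis using assms(1) by (simp add: frc_def sum.inter_filter)
qed

lemma virtual_work:
  assumes V: "finite V" "\<Union>E \<subseteq> V" and E: "finite E"
  shows "(\<Sum>e\<in>E. lam e * strV V p q e) = (\<Sum>v\<in>V. q v \<bullet> frc E p lam v)"
proof -
  have "(\<Sum>e\<in>E. lam e * strV V p q e) = (\<Sum>e\<in>E. \<Sum>v\<in>V. \<Sum>j\<in>V. if e = {v, j} then lam e * (q v \<bullet> (p v - p j)) else 0)"
    by (simp add: strV_def sum_distrib_left if_distrib cong: if_cong)
  also have "\<dots> = (\<Sum>v\<in>V. \<Sum>j\<in>V. \<Sum>e\<in>E. if e = {v, j} then lam e * (q v \<bullet> (p v - p j)) else 0)"
    by (subst sum.swap) (subst sum.swap, simp)
  also have "\<dots> = (\<Sum>v\<in>V. \<Sum>j\<in>V. if {v,j} \<in> E then lam {v,j} * (q v \<bullet> (p v - p j)) else 0)"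
    using E by (simp add: sum.delta)
  also have "\<dots> = (\<Sum>v\<in>V. q v \<bullet> frc E p lam v)"
    using V by (simp add: frc_V inner_sum_right if_distrib[of "inner _"] cong: if_cong)
  finally show ?thesis .
qed

definition edges2 :: "'v set set \<Rightarrow> bool" where
  "edges2 E \<longleftrightarrow> (\<forall>e\<in>E. \<exists>a b. e = {a,b} \<and> a \<noteq> b)"

lemma edges2_finite_Union: "finite E \<Longrightarrow> edges2 E \<Longrightarrow> finite (\<Union>E)"
  unfolding edges2_def by (auto)

lemma strV_edge:
  assumes "finite V" "\<Union>E \<subseteq> V" "edges2 E" "e \<in> E"
  obtains a b where "e = {a,b}" "a \<noteq> b" "strV V p q e = (p a - p b) \<bullet> (q a - q b)"
proof -
  from assms obtain a b where ab: "e = {a,b}" "a \<noteq> b" unfolding edges2_def by blast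
  with assms have "a \<in> V" "b \<in> V" by auto
  with ab assms(1) str_pair[of V a b p q] that show ?thesis by auto
qed

lemma frc_lin:
  assumes E: "finite E" "edges2 E"
  shows "(\<Sum>e\<in>E. c e *\<^sub>R frc E p (dE e) v) = frc E p c v"
proof -
  have fin: "finite {j. {v, j} \<in> E}"
    by (rule finite_subset[OF _ edges2_finite_Union[OF E]]) auto
  have "(\<Sum>e\<in>E. c e *\<^sub>R frc E p (dE e) v)
      = (\<Sum>e\<in>E. \<Sum>j\<in>{j. {v, j} \<in> E}. (if {v,j} = e then c e else 0) *\<^sub>R (p v - p j))"
    unfolding frc_def dE_def by (simp add: scaleR_sum_right) (intro sum.cong refl; simp)
  also have "\<dots> = (\<Sum>j\<in>{j. {v, j} \<in> E}. \<Sum>e\<in>E. (if {v,j} = e then c e else 0) *\<^sub>R (p v - p j))"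
    by (rule sum.swap)
  also have "\<dots> = (\<Sum>j\<in>{j. {v, j} \<in> E}. c {v,j} *\<^sub>R (p v - p j))"
    using E(1) by (intro sum.cong) (auto simp: if_distrib[of "\<lambda>x. x *\<^sub>R _"] sum.delta' cong: if_cong)
  finally show ?thesis by (simp add: frc_def)
qed

lemma strV_lin:
  assumes X: "finite X"
  shows "strV V p (\<lambda>v. \<Sum>x\<in>X. c x *\<^sub>R g x v) e = (\<Sum>x\<in>X. c x * strV V p (g x) e)"
proof -
  have "strV V p (\<lambda>v. \<Sum>x\<in>X. c x *\<^sub>R g x v) e
     = (\<Sum>v\<in>V. \<Sum>j\<in>V. \<Sum>x\<in>X. if e = {v, j} then c x * (g x v \<bullet> (p v - p j)) else 0)"
    unfolding strV_def by (intro sum.cong refl) (simp add: inner_sum_left)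
  also have "\<dots> = (\<Sum>v\<in>V. \<Sum>x\<in>X. \<Sum>j\<in>V. if e = {v, j} then c x * (g x v \<bullet> (p v - p j)) else 0)"
    by (intro sum.cong refl) (rule sum.swap)
  also have "\<dots> = (\<Sum>x\<in>X. \<Sum>v\<in>V. \<Sum>j\<in>V. if e = {v, j} then c x * (g x v \<bullet> (p v - p j)) else 0)"
    by (rule sum.swap)
  also have "\<dots> = (\<Sum>x\<in>X. c x * strV V p (g x) e)"
    unfolding strV_def by (simp add: sum_distrib_left if_distrib[of "\<lambda>y. _ * y"] cong: if_cong)
  finally show ?thesis .
qed

lemma L1:
  fixes w :: "'k \<Rightarrow> 'v \<Rightarrow> real^2"
  assumes I: "finite I" and E: "finite E" "edges2 E"
    and indep: "independent_fw I P E p"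
    and K: "finite K"
    and wsupp: "\<And>k v. k \<in> K \<Longrightarrow> v \<notin> I \<Longrightarrow> w k v = 0"
    and wmot: "\<And>k i j. k \<in> K \<Longrightarrow> {i,j} \<in> E \<Longrightarrow> (p i - p j) \<bullet> (w k i - w k j) = 0"
    and wind: "\<And>c. (\<Sum>k\<in>K. sc (c k) (w k)) = 0 \<Longrightarrow> \<forall>k\<in>K. c k = 0"
  shows "card E + card K \<le> 2 * card I"
proof -
  define V where "V = I \<union> \<Union>E"
  have V: "finite V" "\<Union>E \<subseteq> V" "I \<subseteq> V" using I edges2_finite_Union[OF E] by (auto simp: V_def)
  define Fd where "Fd e = (\<lambda>v. if v \<in> I then frc E p (dE e) v else 0)" for e
  define f where "f x = (case x of Inl e \<Rightarrow> Fd e | Inr k \<Rightarrow> w k)" for x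
  define X where "X = Inl ` E \<union> Inr ` K"
  have cardX: "card X = card E + card K"
    unfolding X_def using E K
    by (subst card_Un_disjoint) (auto simp: card_image)
  have "card X \<le> card ((\<lambda>(i,k). dV i k) ` (I \<times> (UNIV::2 set)))"
  proof (rule family_bound)
    show "finite X" using E K by (simp add: X_def)
    show "finite ((\<lambda>(i,k). dV i k) ` (I \<times> (UNIV::2 set)))" using I by simp
    show "f ` X \<subseteq> module.span sc ((\<lambda>(i,k). dV i k) ` (I \<times> UNIV))"
    proof
      fix g assume "g \<in> f ` X"
      then have "\<And>v. v \<notin> I \<Longrightarrow> g v = 0"
        using wsupp by (auto simp: X_def f_def Fd_def)
      then show "g \<in> module.span sc ((\<lambda>(i,k). dV i k) ` (I \<times> UNIV))"
        by (rule span_verts[OF I])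
    qed
    fix c assume s: "(\<Sum>x\<in>X. sc (c x) (f x)) = 0"
    define U where "U = (\<Sum>e\<in>E. sc (c (Inl e)) (Fd e))"
    define W where "W = (\<Sum>k\<in>K. sc (c (Inr k)) (w k))"
    have "(\<Sum>x\<in>X. sc (c x) (f x)) = U + W"
      unfolding X_def U_def W_def using E K
      by (subst sum.union_disjoint) (auto simp: sum.reindex f_def)
    with s have UW: "U + W = 0" by simp
    define lam where "lam e = c (Inl e)" for e
    have Uv: "U v = (if v \<in> I then frc E p lam v else 0)" for v
      using E frc_lin[OF E, of lam p v]
      by (simp add: U_def sum_fun_apply Fd_def lam_def)
    have Wv: "W v = (\<Sum>k\<in>K. c (Inr k) *\<^sub>R w k v)" for v
      using K by (simp add: W_def sum_fun_apply)
    have Wsupp: "v \<notin> I \<Longrightarrow> W v = 0" for v using Wv wsupp by simp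
    have Wstr: "e \<in> E \<Longrightarrow> strV V p W e = 0" for e
    proof -
      assume e: "e \<in> E"
      have "strV V p W e = (\<Sum>k\<in>K. c (Inr k) * strV V p (w k) e)"
      proof -
        have "W = (\<lambda>v. \<Sum>k\<in>K. c (Inr k) *\<^sub>R w k v)" using Wv by auto
        then show ?thesis using strV_lin[OF K, of V p "\<lambda>k. c (Inr k)" w e] by simp
      qed
      also have "\<dots> = 0"
      proof (rule sum.neutral, intro ballI)
        fix k assume k: "k \<in> K"
        obtain a b where "e = {a,b}" "strV V p (w k) e = (p a - p b) \<bullet> (w k a - w k b)"
          using strV_edge[OF V(1,2) E(2) e] by metis
        with wmot[OF k] e show "c (Inr k) * strV V p (w k) e = 0" by simp
      qed
      finally show ?thesis .
    qed
    have "(\<Sum>v\<in>V. W v \<bullet> W v) = - (\<Sum>v\<in>V. W v \<bullet> U v)"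
      using UW by (simp add: sum_negf[symmetric] fun_eq_iff add_eq_0_iff2 eq_neg_iff_add_eq_0[symmetric])
    also have "(\<Sum>v\<in>V. W v \<bullet> U v) = (\<Sum>v\<in>V. W v \<bullet> frc E p lam v)"
      by (rule sum.cong) (auto simp: Uv Wsupp)
    also have "\<dots> = (\<Sum>e\<in>E. lam e * strV V p W e)"
      by (rule virtual_work[OF V(1,2) E(1), symmetric])
    also have "\<dots> = 0" by (simp add: Wstr)
    finally have "(\<Sum>v\<in>V. W v \<bullet> W v) = 0" by simp
    then have "\<forall>v\<in>V. W v \<bullet> W v = 0"
      using V(1) by (subst (asm) sum_nonneg_eq_0_iff) auto
    then have W0: "W = 0" using Wsupp V(3) by (auto simp: fun_eq_iff)
    then have cK: "\<forall>k\<in>K. c (Inr k) = 0" using wind[of "\<lambda>k. c (Inr k)"] by (simp add: W_def)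
    from W0 UW have "U = 0" by simp
    then have "self_stress I P E p lam"
      unfolding self_stress_def
    proof (intro ballI)
      fix i assume "i \<in> I"
      then have "U i = frc E p lam i" by (simp add: Uv)
      with \<open>U = 0\<close> show "(\<Sum>j\<in>{j. {i, j} \<in> E}. lam {i, j} *\<^sub>R (p i - p j)) = 0"
        by (simp add: frc_def)
    qed
    then have "\<forall>e\<in>E. lam e = 0" using indep by (simp add: independent_fw_def)
    then show "\<forall>x\<in>X. c x = 0" using cK by (auto simp: X_def lam_def)
  qed
  also have "\<dots> \<le> 2 * card I" by (rule card_dV[OF I])
  finally show ?thesis using cardX by simp
qed

lemma L2:
  assumes I: "finite I" and E: "finite E" "edges2 E"
    and nomot: "\<And>q. first_order_motion I P E p q \<Longrightarrow> q = (\<lambda>_. 0)"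
  shows "2 * card I \<le> card E"
proof -
  define V where "V = I \<union> \<Union>E"
  have V: "finite V" "\<Union>E \<subseteq> V" "I \<subseteq> V" using I edges2_finite_Union[OF E] by (auto simp: V_def)
  define Phi where "Phi q = (\<lambda>e. if e \<in> E then strV V p q e else 0)" for q
  define f where "f x = Phi (case x of (i,k) \<Rightarrow> dV i k)" for x
  have "card (I \<times> (UNIV::2 set)) \<le> card (dE ` E)"
  proof (rule family_bound)
    show "finite (I \<times> (UNIV::2 set))" using I by simp
    show "finite (dE ` E)" using E by simp
    show "f ` (I \<times> UNIV) \<subseteq> module.span sc (dE ` E)"
      by (auto simp: f_def Phi_def intro!: span_edges[OF E(1)])
    fix c assume s: "(\<Sum>x\<in>I \<times> UNIV. sc (c x) (f x)) = 0"
    define q where "q v = (\<Sum>x\<in>I \<times> (UNIV::2 set). c x *\<^sub>R (case x of (i,k) \<Rightarrow> dV i k) v)" for v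
    have qsupp: "v \<notin> I \<Longrightarrow> q v = 0" for v
      by (auto simp: q_def dV_def intro!: sum.neutral)
    have "first_order_motion I P E p q"
      unfolding first_order_motion_def
    proof (intro conjI allI impI)
      fix v assume "v \<notin> I" then show "q v = 0" by (rule qsupp)
    next
      fix i j assume ij: "{i,j} \<in> E"
      obtain a b where ab: "{i,j} = {a,b}" "a \<noteq> b" "strV V p q {i,j} = (p a - p b) \<bullet> (q a - q b)"
        using strV_edge[OF V(1,2) E(2) ij] by metis
      have "strV V p q {i,j} = (\<Sum>x\<in>I \<times> UNIV. c x * strV V p (case x of (i,k) \<Rightarrow> dV i k) {i,j})"
        unfolding q_def by (rule strV_lin) (use I in simp)
      also have "\<dots> = (\<Sum>x\<in>I \<times> UNIV. sc (c x) (f x)) {i,j}"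
        using I ij by (simp add: sum_fun_apply f_def Phi_def)
      also have "\<dots> = 0" using s by simp
      finally have "(p a - p b) \<bullet> (q a - q b) = 0" using ab by simp
      with ab(1) show "(p i - p j) \<bullet> (q i - q j) = 0"
        by (auto simp: doubleton_eq_iff inner_commute algebra_simps)
    qed
    then have q0: "q = (\<lambda>_. 0)" by (rule nomot)
    show "\<forall>x\<in>I \<times> UNIV. c x = 0"
    proof
      fix x assume x: "x \<in> I \<times> (UNIV::2 set)"
      obtain i k where xik: "x = (i,k)" by (cases x)
      have "q i = (\<Sum>a\<in>I. \<Sum>k'\<in>UNIV. c (a,k') *\<^sub>R dV a k' i)"
        unfolding q_def by (simp add: sum.cartesian_product split_beta)
      also have "\<dots> = (\<Sum>a\<in>I. if a = i then (\<Sum>k'\<in>UNIV. c (i,k') *\<^sub>R axis k' 1) else 0)"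
        by (intro sum.cong refl) (auto simp: dV_def)
      also have "\<dots> = (\<Sum>k'\<in>UNIV. c (i,k') *\<^sub>R axis k' 1)"
        using I x xik by simp
      finally have "(\<Sum>k'\<in>UNIV. c (i,k') *\<^sub>R axis k' (1::real)) = 0" using q0 by simp
      then have "(\<Sum>k'\<in>UNIV. c (i,k') *\<^sub>R axis k' (1::real)) $ k = 0" by simp
      moreover have "k = 1 \<or> k = 2" by (rule exhaust_2)
      ultimately show "c x = 0" using xik by (auto simp: sum_2 axis_def)
    qed
  qed
  also have "\<dots> \<le> card E" using E by (simp add: card_image_le)
  finally show ?thesis by (simp add: card_cartesian_product)
qed

definition rot :: "real^2 \<Rightarrow> real^2" where "rot x = vector [-(x$2), x$1]"

lemma inner2: "(x::real^2) \<bullet> y = x$1 * y$1 + x$2 * y$2"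
  by (simp add: inner_vec_def sum_2)

lemma rot_comp[simp]: "rot x $ 1 = - (x$2)" "rot x $ 2 = x$1" by (simp_all add: rot_def)

lemma rot_diff: "rot x - rot y = rot (x - y)" by (simp add: vec_eq_iff forall_2)
lemma rot_orth[simp]: "x \<bullet> rot x = 0" by (simp add: inner2 algebra_simps)
lemma rot_orth2[simp]: "(x - y) \<bullet> rot (y - x) = 0" by (simp add: inner2 algebra_simps)
lemma rot_orth3[simp]: "(x - y) \<bullet> (- rot (x - y)) = 0" by (simp add: inner2 algebra_simps)
lemma rot_zero: "rot x = 0 \<longleftrightarrow> x = 0" by (auto simp: vec_eq_iff forall_2)

lemma frc_transfer:
  assumes V: "finite V" "\<Union>E1 \<subseteq> V" "\<Union>E2 \<subseteq> V"
    and eq: "\<And>j. j \<in> V \<Longrightarrow> (if {i,j} \<in> E1 then l1 {i,j} *\<^sub>R (p i - p j) else 0)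
                          = (if {i,j} \<in> E2 then l2 {i,j} *\<^sub>R (p i - p j) else 0)"
  shows "frc E1 p l1 i = frc E2 p l2 i"
  using eq by (simp add: frc_V[OF V(1,2)] frc_V[OF V(1,3)])

lemma indep_edge_pos:
  assumes ind: "independent_fw I P E p" and e: "{a,b} \<in> E" and ab: "a \<noteq> b"
  shows "p a \<noteq> p b"
proof
  assume pab: "p a = p b"
  have "self_stress I P E p (dE {a,b})"
    unfolding self_stress_def
  proof (intro ballI sum.neutral)
    fix i j assume "j \<in> {j. {i,j} \<in> E}"
    show "dE {a, b} {i, j} *\<^sub>R (p i - p j) = 0"
      using pab by (auto simp: dE_def doubleton_eq_iff)
  qed
  with ind e have "dE {a,b} {a,b} = 0" unfolding independent_fw_def by blast
  then show False by (simp add: dE_def)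
qed

lemma sub_indep:
  assumes I: "finite I" and E: "finite E" "edges2 E" and IP: "I \<inter> P = {}"
    and ind: "independent_fw I P E p"
    and sub: "I' \<subseteq> I" "P' \<subseteq> P" "E' \<subseteq> E" "\<forall>e\<in>E'. e \<subseteq> I' \<union> P'"
  shows "independent_fw I' P' E' p"
  unfolding independent_fw_def
proof (intro allI impI ballI)
  fix lam e assume st: "self_stress I' P' E' p lam" and e: "e \<in> E'"
  define mu where "mu e = (if e \<in> E' then lam e else 0)" for e
  define V where "V = \<Union>E"
  have V: "finite V" "\<Union>E \<subseteq> V" "\<Union>E' \<subseteq> V" using sub edges2_finite_Union[OF E] by (auto simp: V_def)
  have "self_stress I P E p mu"
    unfolding self_stress_def
  proof
    fix i assume i: "i \<in> I"
    show "(\<Sum>j\<in>{j. {i, j} \<in> E}. mu {i, j} *\<^sub>R (p i - p j)) = 0"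
    proof (cases "i \<in> I'")
      case True
      have "frc E p mu i = frc E' p lam i"
        by (rule frc_transfer[OF V]) (use sub in \<open>auto simp: mu_def\<close>)
      then show ?thesis using st True by (simp add: frc_def self_stress_def)
    next
      case False
      have "\<And>j. {i,j} \<notin> E'" using sub i False IP by blast
      then show ?thesis by (intro sum.neutral) (auto simp: mu_def)
    qed
  qed
  then have "mu e = 0" using ind e sub unfolding independent_fw_def by blast
  then show "lam e = 0" using e by (simp add: mu_def)
qed

lemma iso_count:
  assumes I: "finite I" and P: "finite P" and IP: "I \<inter> P = {}" and E: "finite E" "edges2 E"
    and iso: "isostatic_fw I P E p"
  shows "pinned_isostatic_graph I P E"
  unfolding pinned_isostatic_graph_def
proof (intro conjI allI impI)
  have ind: "independent_fw I P E p" and nomot: "\<And>q. first_order_motion I P E p q \<Longrightarrow> q = (\<lambda>_. 0)"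
    using iso by (auto simp: isostatic_fw_def)
  have "card E + card ({}::nat set) \<le> 2 * card I"
    by (rule L1[OF I E ind, of "{}" "\<lambda>_ _. 0"]) auto
  moreover have "2 * card I \<le> card E" by (rule L2[OF I E nomot])
  ultimately show "int (card E) = 2 * int (card I)" by simp
  fix I' P' E' assume sub: "I' \<subseteq> I" "P' \<subseteq> P" "E' \<subseteq> E" "E' \<noteq> {}" "\<forall>e\<in>E'. e \<subseteq> I' \<union> P'"
  have ind': "independent_fw I' P' E' p" by (rule sub_indep[OF I E IP ind]) (use sub in auto)
  have I': "finite I'" using sub I finite_subset by blast
  have E': "finite E'" "edges2 E'" using sub E finite_subset[of E' E] by (auto simp: edges2_def)
  obtain e0 where e0: "e0 \<in> E'" using sub by blast
  then obtain a b where ab: "e0 = {a,b}" "a \<noteq> b" using E' by (auto simp: edges2_def)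
  have pab: "p a \<noteq> p b" using indep_edge_pos[OF ind' _ ab(2)] e0 ab by simp
  have abin: "a \<in> I' \<union> P'" "b \<in> I' \<union> P'" using sub e0 ab by auto
  have IP': "I' \<inter> P' = {}" using sub IP by blast
  have ij_ne: "\<And>i j. {i,j} \<in> E' \<Longrightarrow> i \<noteq> j" using E' by (auto simp: edges2_def doubleton_eq_iff)
  show "card P' \<ge> 2 \<Longrightarrow> int (card E') \<le> 2 * int (card I')"
  proof -
    have "card E' + card ({}::nat set) \<le> 2 * card I'"
      by (rule L1[OF I' E' ind', of "{}" "\<lambda>_ _. 0"]) auto
    then show ?thesis by simp
  qed
  show "card P' = 1 \<Longrightarrow> int (card E') \<le> 2 * int (card I') - 1"
  proof -
    assume "card P' = 1"
    then obtain z where z: "P' = {z}" by (auto simp: card_Suc_eq)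
    define w where "w k v = (if v \<in> I' then rot (p v - p z) else 0)" for k :: nat and v
    obtain v0 where v0: "v0 \<in> I'" "p v0 \<noteq> p z"
    proof -
      consider "a \<in> I'" "p a \<noteq> p z" | "b \<in> I'" "p b \<noteq> p z" | "p a = p z" "p b = p z"
        using abin z by auto
      then show ?thesis using that pab by cases auto
    qed
    have "card E' + card {0::nat} \<le> 2 * card I'"
    proof (rule L1[OF I' E' ind', of "{0}" w])
      fix k i j assume "k \<in> {0::nat}" and ij: "{i,j} \<in> E'"
      have "i \<in> I' \<union> {z}" "j \<in> I' \<union> {z}" "i \<noteq> j" using sub ij z ij_ne[OF ij] by auto
      moreover have "z \<notin> I'" using IP' z by auto
      ultimately consider "i \<in> I'" "j \<in> I'" | "i \<in> I'" "j = z" | "i = z" "j \<in> I'" by auto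
      then show "(p i - p j) \<bullet> (w k i - w k j) = 0"
      proof cases
        case 1
        have "w k i - w k j = rot (p i - p j)" using 1 by (simp add: w_def rot_diff)
        then show ?thesis by simp
      next
        case 2 then show ?thesis using \<open>z \<notin> I'\<close> by (simp add: w_def)
      next
        case 3 then show ?thesis using \<open>z \<notin> I'\<close> by (simp add: w_def)
      qed
    next
      fix c assume "(\<Sum>k\<in>{0::nat}. sc (c k) (w k)) = 0"
      then have "(\<Sum>k\<in>{0::nat}. sc (c k) (w k)) v0 = 0" by simp
      then have "c 0 *\<^sub>R rot (p v0 - p z) = 0" using v0 by (simp add: w_def)
      then show "\<forall>k\<in>{0::nat}. c k = 0" using v0 by (simp add: rot_zero)
    qed (auto simp: w_def)
    then show ?thesis by simp
  qed
  show "P' = {} \<Longrightarrow> int (card E') \<le> 2 * int (card I') - 3"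
  proof -
    assume P'0: "P' = {}"
    define w where "w k v = (if v \<in> I' then (if k = (0::nat) then rot (p v) else if k = 1 then axis 1 1 else axis 2 1) else 0)" for k v
    have "card E' + card {0::nat,1,2} \<le> 2 * card I'"
    proof (rule L1[OF I' E' ind', of "{0,1,2}" w])
      fix k i j assume "k \<in> {0::nat,1,2}" and ij: "{i,j} \<in> E'"
      have "i \<in> I'" "j \<in> I'" using sub ij P'0 by auto
      then show "(p i - p j) \<bullet> (w k i - w k j) = 0"
        by (auto simp: w_def rot_diff)
    next
      fix c assume s: "(\<Sum>k\<in>{0::nat,1,2}. sc (c k) (w k)) = 0"
      have ain: "a \<in> I'" "b \<in> I'" using abin P'0 by auto
      have "\<And>v. v \<in> I' \<Longrightarrow> c 0 *\<^sub>R rot (p v) + c 1 *\<^sub>R axis 1 1 + c 2 *\<^sub>R axis 2 1 = 0"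
      proof -
        fix v assume v: "v \<in> I'"
        have "(\<Sum>k\<in>{0::nat,1,2}. sc (c k) (w k)) v = 0" using s by simp
        then show "c 0 *\<^sub>R rot (p v) + c 1 *\<^sub>R axis 1 1 + c 2 *\<^sub>R axis 2 1 = 0"
          using v by (simp add: w_def add.assoc)
      qed
      note h = this
      have comp: "- c 0 * p v $ 2 + c 1 = 0 \<and> c 0 * p v $ 1 + c 2 = 0" if v: "v \<in> I'" for v
      proof -
        have "(c 0 *\<^sub>R rot (p v) + c 1 *\<^sub>R axis 1 1 + c 2 *\<^sub>R axis 2 1) $ 1 = 0"
             "(c 0 *\<^sub>R rot (p v) + c 1 *\<^sub>R axis 1 1 + c 2 *\<^sub>R axis 2 1) $ 2 = 0"
          using h[OF v] by simp_all
        then show ?thesis by (simp add: axis_def)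
      qed
      have eqs: "- c 0 * p a $ 2 + c 1 = 0" "c 0 * p a $ 1 + c 2 = 0"
                "- c 0 * p b $ 2 + c 1 = 0" "c 0 * p b $ 1 + c 2 = 0"
        using comp[OF ain(1)] comp[OF ain(2)] by auto
      have d: "c 0 * (p a $ 2 - p b $ 2) = 0" "c 0 * (p a $ 1 - p b $ 1) = 0"
        unfolding right_diff_distrib using eqs by linarith+
      have "p a $ 1 \<noteq> p b $ 1 \<or> p a $ 2 \<noteq> p b $ 2" using pab by (auto simp: vec_eq_iff forall_2)
      then have "c 0 = 0" using d by auto
      then show "\<forall>k\<in>{0::nat,1,2}. c k = 0" using eqs by auto
    qed (auto simp: w_def)
    then show ?thesis by simp
  qed
qed

lemma motion_strV_zero:
  assumes "first_order_motion I P E p q" "e \<in> E" "edges2 E" "finite V" "\<Union>E \<subseteq> V"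
  shows "strV V p q e = 0"
proof -
  obtain a b where "e = {a,b}" "strV V p q e = (p a - p b) \<bullet> (q a - q b)"
    using strV_edge[OF assms(4,5,3,2)] by metis
  with assms(1,2) show ?thesis by (simp add: first_order_motion_def)
qed

lemma vw_zero:
  assumes "finite V" "\<Union>E \<subseteq> V" "finite E" "self_stress I P E p lam" "\<And>v. v \<notin> I \<Longrightarrow> q v = 0"
  shows "(\<Sum>e\<in>E. lam e * strV V p q e) = 0"
proof -
  have "(\<Sum>e\<in>E. lam e * strV V p q e) = (\<Sum>v\<in>V. q v \<bullet> frc E p lam v)"
    by (rule virtual_work[OF assms(1-3)])
  also have "\<dots> = 0"
  proof (intro sum.neutral ballI)
    fix v assume "v \<in> V"
    show "q v \<bullet> frc E p lam v = 0"
    proof (cases "v \<in> I")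
      case True then show ?thesis using assms(4) by (simp add: self_stress_def frc_def)
    next
      case False then show ?thesis using assms(5) by simp
    qed
  qed
  finally show ?thesis .
qed

lemma parallel2:
  fixes m F u :: "real^2"
  assumes "m \<noteq> 0" "m \<bullet> F = 0" "m \<bullet> u = 0" "u \<noteq> 0"
  shows "F = ((F \<bullet> u) / (u \<bullet> u)) *\<^sub>R u"
proof -
  have e1: "m$1 * F$1 + m$2 * F$2 = 0" "m$1 * u$1 + m$2 * u$2 = 0" using assms by (simp_all add: inner2)
  have a1: "m$1 * F$1 = - (m$2 * F$2)" "m$1 * u$1 = - (m$2 * u$2)" using e1 by linarith+
  have a2: "m$2 * F$2 = - (m$1 * F$1)" "m$2 * u$2 = - (m$1 * u$1)" using e1 by linarith+
  have "m$1 * (F$1 * u$2 - F$2 * u$1) = 0"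
  proof -
    have "m$1 * (F$1 * u$2 - F$2 * u$1) = (m$1 * F$1) * u$2 - (m$1 * u$1) * F$2" by (simp add: algebra_simps)
    also have "\<dots> = (- (m$2 * F$2)) * u$2 - (- (m$2 * u$2)) * F$2" by (simp only: a1)
    finally show ?thesis by (simp add: algebra_simps)
  qed
  moreover have "m$2 * (F$1 * u$2 - F$2 * u$1) = 0"
  proof -
    have "m$2 * (F$1 * u$2 - F$2 * u$1) = (m$2 * u$2) * F$1 - (m$2 * F$2) * u$1" by (simp add: algebra_simps)
    also have "\<dots> = (- (m$1 * u$1)) * F$1 - (- (m$1 * F$1)) * u$1" by (simp only: a2)
    finally show ?thesis by (simp add: algebra_simps)
  qed
  moreover have "m$1 \<noteq> 0 \<or> m$2 \<noteq> 0" using assms(1) by (auto simp: vec_eq_iff forall_2)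
  ultimately have det: "F$1 * u$2 = F$2 * u$1" by auto
  have uu: "u \<bullet> u \<noteq> 0" using assms(4) by simp
  have uu': "u$1 * u$1 + u$2 * u$2 \<noteq> 0" using uu by (simp add: inner2)
  have "F$1 * (u$1 * u$1 + u$2 * u$2) - (F$1 * u$1 + F$2 * u$2) * u$1 = u$2 * (F$1 * u$2 - F$2 * u$1)"
    by (simp add: algebra_simps)
  then have h1: "F$1 * (u$1 * u$1 + u$2 * u$2) = (F$1 * u$1 + F$2 * u$2) * u$1" using det by simp
  have "F$2 * (u$1 * u$1 + u$2 * u$2) - (F$1 * u$1 + F$2 * u$2) * u$2 = u$1 * (F$2 * u$1 - F$1 * u$2)"
    by (simp add: algebra_simps)
  then have h2: "F$2 * (u$1 * u$1 + u$2 * u$2) = (F$1 * u$1 + F$2 * u$2) * u$2" using det by simp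
  have "F$1 = (F \<bullet> u) / (u \<bullet> u) * u$1"
    using h1 uu' by (simp add: inner2 field_simps)
  moreover have "F$2 = (F \<bullet> u) / (u \<bullet> u) * u$2"
    using h2 uu' by (simp add: inner2 field_simps)
  ultimately show ?thesis by (simp add: vec_eq_iff forall_2)
qed


lemma solve2:
  fixes u w d :: "real^2"
  assumes "u \<noteq> w" "(w - u) \<bullet> d = 0"
  shows "\<exists>y. u \<bullet> y = 0 \<and> w \<bullet> y = - (w \<bullet> d)"
proof (cases "w \<bullet> rot u = 0")
  case False
  show ?thesis
    by (rule exI[of _ "(- (w \<bullet> d) / (w \<bullet> rot u)) *\<^sub>R rot u"])
       (use False in \<open>simp add: inner_scaleR_right\<close>)
next
  case True
  have D: "w$1 * u$2 = w$2 * u$1" using True by (simp add: inner2 algebra_simps)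
  define z where "z = w - u"
  have z0: "z \<noteq> 0" using assms(1) by (simp add: z_def)
  have zd: "z$1 * d$1 + z$2 * d$2 = 0" using assms(2) by (simp add: z_def inner2)
  have zd1: "z$1 * d$1 = - (z$2 * d$2)" and zd2: "z$2 * d$2 = - (z$1 * d$1)" using zd by linarith+
  have wz: "w$1 * z$2 = w$2 * z$1" using D by (simp add: z_def algebra_simps)
  have "z$1 * (w \<bullet> d) = 0"
  proof -
    have "z$1 * (w \<bullet> d) = w$1 * (z$1 * d$1) + w$2 * z$1 * d$2" by (simp add: inner2 algebra_simps)
    also have "\<dots> = w$1 * (- (z$2 * d$2)) + w$2 * z$1 * d$2" by (simp only: zd1)
    also have "\<dots> = (w$2 * z$1 - w$1 * z$2) * d$2" by (simp add: algebra_simps)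
    finally show ?thesis using wz by simp
  qed
  moreover have "z$2 * (w \<bullet> d) = 0"
  proof -
    have "z$2 * (w \<bullet> d) = w$2 * (z$2 * d$2) + w$1 * z$2 * d$1" by (simp add: inner2 algebra_simps)
    also have "\<dots> = w$2 * (- (z$1 * d$1)) + w$1 * z$2 * d$1" by (simp only: zd2)
    also have "\<dots> = (w$1 * z$2 - w$2 * z$1) * d$1" by (simp add: algebra_simps)
    finally show ?thesis using wz by simp
  qed
  moreover have "z$1 \<noteq> 0 \<or> z$2 \<noteq> 0" using z0 by (auto simp: vec_eq_iff forall_2)
  ultimately have "w \<bullet> d = 0" by auto
  then show ?thesis by (intro exI[of _ 0]) simp
qed

lemma pg_facts:
  assumes "pinned_graph I P E"
  shows "finite I" "finite P" "I \<inter> P = {}" "finite E" "edges2 E" "\<forall>e\<in>E. e \<subseteq> I \<union> P"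
proof -
  show fI: "finite I" "finite P" "I \<inter> P = {}" using assms by (auto simp: pinned_graph_def)
  show sub: "\<forall>e\<in>E. e \<subseteq> I \<union> P" using assms by (fastforce simp: pinned_graph_def)
  show "edges2 E" using assms by (fastforce simp: pinned_graph_def edges2_def)
  have "E \<subseteq> Pow (I \<union> P)" using sub by auto
  then show "finite E" using fI by (meson finite_Pow_iff finite_UnI finite_subset)
qed

lemma active_m:
  assumes ms: "\<forall>q. first_order_motion I P E p q \<longrightarrow> (\<exists>c::real. q = (\<lambda>v. c *\<^sub>R m v))"
    and act: "active_driver I P E p d" and bp: "brace_pair d = (x,y)"
  shows "(p x - p y) \<bullet> (m x - m y) \<noteq> 0"
proof -
  obtain q where q: "first_order_motion I P E p q" "(p x - p y) \<bullet> (q x - q y) \<noteq> 0"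
    using act bp by (auto simp: active_driver_def)
  then obtain c where "q = (\<lambda>v. c *\<^sub>R m v)" using ms by blast
  with q(2) show ?thesis by (auto simp: scaleR_diff_right[symmetric])
qed

lemma add_bar:
  assumes I: "finite I" and E: "finite E" "edges2 E" and xy: "x \<noteq> y"
    and indep: "independent_fw I P E p" and mot: "first_order_motion I P E p m"
    and ms: "\<forall>q. first_order_motion I P E p q \<longrightarrow> (\<exists>c::real. q = (\<lambda>v. c *\<^sub>R m v))"
    and s: "(p x - p y) \<bullet> (m x - m y) \<noteq> 0"
  shows "isostatic_fw I P (insert {x,y} E) p"
  unfolding isostatic_fw_def
proof (intro conjI allI impI)
  have notin: "{x,y} \<notin> E" using mot s by (auto simp: first_order_motion_def)
  fix q assume q: "first_order_motion I P (insert {x, y} E) p q"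
  then have "first_order_motion I P E p q" by (auto simp: first_order_motion_def)
  then obtain c where c: "q = (\<lambda>v. c *\<^sub>R m v)" using ms by blast
  have "(p x - p y) \<bullet> (q x - q y) = 0" using q by (auto simp: first_order_motion_def)
  then have "c * ((p x - p y) \<bullet> (m x - m y)) = 0" by (simp add: c scaleR_diff_right[symmetric])
  with s have "c = 0" by simp
  then show "q = (\<lambda>_. 0)" by (simp add: c)
next
  have notin: "{x,y} \<notin> E" using mot s by (auto simp: first_order_motion_def)
  let ?E2 = "insert {x,y} E"
  define V where "V = I \<union> \<Union>?E2"
  have V: "finite V" "\<Union>?E2 \<subseteq> V" "\<Union>E \<subseteq> V" "x \<in> V" "y \<in> V"
    using I edges2_finite_Union[OF E] by (auto simp: V_def)
  show "independent_fw I P ?E2 p"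
    unfolding independent_fw_def
  proof (intro allI impI)
    fix lam assume st: "self_stress I P ?E2 p lam"
    have "(\<Sum>e\<in>?E2. lam e * strV V p m e) = 0"
      by (rule vw_zero[OF V(1,2) _ st]) (use E mot in \<open>auto simp: first_order_motion_def\<close>)
    moreover have "(\<Sum>e\<in>E. lam e * strV V p m e) = 0"
      by (intro sum.neutral ballI) (simp add: motion_strV_zero[OF mot _ E(2) V(1,3)])
    ultimately have "lam {x,y} * strV V p m {x,y} = 0" using E notin by simp
    moreover have "strV V p m {x,y} = (p x - p y) \<bullet> (m x - m y)" by (rule str_pair[OF V(1,4,5) xy])
    ultimately have lxy: "lam {x,y} = 0" using s by simp
    have "self_stress I P E p lam"
      unfolding self_stress_def
    proof
      fix i assume i: "i \<in> I"
      have "frc E p lam i = frc ?E2 p lam i"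
        by (rule frc_transfer[OF V(1,3,2)]) (auto simp: lxy)
      then show "(\<Sum>j\<in>{j. {i, j} \<in> E}. lam {i, j} *\<^sub>R (p i - p j)) = 0"
        using st i by (simp add: frc_def self_stress_def)
    qed
    then have "\<forall>e\<in>E. lam e = 0" using indep by (simp add: independent_fw_def)
    then show "\<forall>e\<in>?E2. lam e = 0" using lxy by simp
  qed
qed

lemma add_bar_full:
  assumes pg: "pinned_graph I P E" and xy: "x \<noteq> y" "x \<in> I \<union> P" "y \<in> I \<union> P"
    and indep: "independent_fw I P E p" and mot: "first_order_motion I P E p m"
    and ms: "\<forall>q. first_order_motion I P E p q \<longrightarrow> (\<exists>c::real. q = (\<lambda>v. c *\<^sub>R m v))"
    and s: "(p x - p y) \<bullet> (m x - m y) \<noteq> 0"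
  shows "isostatic_fw I P (insert {x,y} E) p \<and> pinned_isostatic_graph I P (insert {x,y} E)"
proof -
  note f = pg_facts[OF pg]
  have iso: "isostatic_fw I P (insert {x,y} E) p" by (rule add_bar[OF f(1,4,5) xy(1) indep mot ms s])
  moreover have "pinned_isostatic_graph I P (insert {x,y} E)"
    by (rule iso_count[OF f(1-3) _ _ iso]) (use f xy in \<open>auto simp: edges2_def\<close>)
  ultimately show ?thesis by simp
qed

lemma edges2_ne: "edges2 E \<Longrightarrow> {a,b} \<in> E \<Longrightarrow> a \<noteq> b"
  unfolding edges2_def by (metis doubleton_eq_iff)

lemma deg2_case:
  assumes pg: "pinned_graph I P E" and b: "b \<in> I" and eab: "{a,b} \<in> E" and ebc: "{b,c} \<in> E"
    and ac: "a \<noteq> c" and deg: "degree E b = 2"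
    and indep: "independent_fw I P E p" and mot: "first_order_motion I P E p m"
    and ms: "\<forall>q. first_order_motion I P E p q \<longrightarrow> (\<exists>k::real. q = (\<lambda>v. k *\<^sub>R m v))"
    and s: "(p a - p c) \<bullet> (m a - m c) \<noteq> 0"
  shows "isostatic_fw (I - {b}) P (insert {a,c} {e\<in>E. b \<notin> e}) p \<and>
         pinned_isostatic_graph (I - {b}) P (insert {a,c} {e\<in>E. b \<notin> e})"
proof -
  note f = pg_facts[OF pg]
  define E0 where "E0 = {e\<in>E. b \<notin> e}"
  define E2 where "E2 = insert {a,c} E0"
  define I2 where "I2 = I - {b}"
  have ab: "a \<noteq> b" and bc: "b \<noteq> c" using edges2_ne[OF f(5) eab] edges2_ne[OF f(5) ebc] by auto
  have Bset: "{e\<in>E. b \<in> e} = {{a,b},{b,c}}"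
  proof -
    have "{{a,b},{b,c}} \<subseteq> {e\<in>E. b \<in> e}" using eab ebc by auto
    moreover have "{a,b} \<noteq> {b,c}" using ac ab by (auto simp: doubleton_eq_iff)
    then have "card {{a,b},{b,c}} = (2::nat)" by simp
    moreover have "finite {e\<in>E. b \<in> e}" using f(4) by simp
    moreover have "card {e\<in>E. b \<in> e} = 2" using deg by (simp add: degree_def)
    ultimately show ?thesis using card_subset_eq[of "{e\<in>E. b \<in> e}" "{{a,b},{b,c}}"] by simp
  qed
  have bedge: "{i,j} \<in> E \<Longrightarrow> b \<in> {i,j} \<Longrightarrow> {i,j} = {a,b} \<or> {i,j} = {b,c}" for i j
  proof -
    assume "{i,j} \<in> E" "b \<in> {i,j}"
    then have "{i,j} \<in> {e\<in>E. b \<in> e}" by simp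
    then show ?thesis using Bset by simp
  qed
  have notac: "{a,c} \<notin> E"
  proof
    assume "{a,c} \<in> E"
    then have "(p a - p c) \<bullet> (m a - m c) = 0" using mot by (simp add: first_order_motion_def)
    with s show False by simp
  qed
  have pac: "p a \<noteq> p c" using s by auto
  have E2fin: "finite E2" using f(4) by (simp add: E2_def E0_def)
  have E0e: "edges2 E0" using f(5) unfolding edges2_def E0_def by blast
  have E2e: "edges2 E2" using E0e ac unfolding edges2_def E2_def by blast
  have iso: "isostatic_fw I2 P E2 p"
    unfolding isostatic_fw_def
  proof (intro conjI allI impI)
    fix q assume q: "first_order_motion I2 P E2 p q"
    have qb: "q b = 0" using q by (simp add: first_order_motion_def I2_def)
    define u where "u = p b - p a"
    define w where "w = p b - p c"
    define d where "d = q a - q c"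
    have "(p a - p c) \<bullet> (q a - q c) = 0" using q by (simp add: first_order_motion_def E2_def)
    moreover have "w - u = p a - p c" by (simp add: u_def w_def)
    ultimately have "(w - u) \<bullet> d = 0" by (simp add: d_def)
    moreover have "u \<noteq> w" using pac by (auto simp: u_def w_def)
    ultimately obtain y where y: "u \<bullet> y = 0" "w \<bullet> y = - (w \<bullet> d)" using solve2 by blast
    define q' where "q' = q(b := q a + y)"
    have "first_order_motion I P E p q'"
      unfolding first_order_motion_def
    proof (intro conjI allI impI)
      fix v assume "v \<notin> I" then show "q' v = 0" using q b by (auto simp: q'_def first_order_motion_def I2_def)
    next
      fix i j assume ij: "{i,j} \<in> E"
      show "(p i - p j) \<bullet> (q' i - q' j) = 0"
      proof (cases "b \<in> {i,j}")
        case False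
        then have "{i,j} \<in> E2" using ij by (auto simp: E2_def E0_def)
        then show ?thesis using q False by (auto simp: q'_def first_order_motion_def)
      next
        case True
        then have "{i,j} = {a,b} \<or> {i,j} = {b,c}" by (rule bedge[OF ij])
        then consider "i = a" "j = b" | "i = b" "j = a" | "i = b" "j = c" | "i = c" "j = b"
          by (metis doubleton_eq_iff)
        then show ?thesis
        proof cases
          case 1
          have "(p i - p j) \<bullet> (q' i - q' j) = u \<bullet> y" using 1 ab
            by (simp add: q'_def u_def inner_diff_left inner_diff_right)
          then show ?thesis using y by simp
        next
          case 2
          have "(p i - p j) \<bullet> (q' i - q' j) = u \<bullet> y" using 2 ab
            by (simp add: q'_def u_def inner_diff_left inner_diff_right)
          then show ?thesis using y by simp
        next
          case 3
          have "(p i - p j) \<bullet> (q' i - q' j) = w \<bullet> y + w \<bullet> d" using 3 bc ab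
            by (simp add: q'_def w_def d_def inner_diff_left inner_diff_right inner_add_right)
          then show ?thesis using y by simp
        next
          case 4
          have "(p i - p j) \<bullet> (q' i - q' j) = w \<bullet> y + w \<bullet> d" using 4 bc ab
            by (simp add: q'_def w_def d_def inner_diff_left inner_diff_right inner_add_right)
          then show ?thesis using y by simp
        qed
      qed
    qed
    then obtain k where k: "q' = (\<lambda>v. k *\<^sub>R m v)" using ms by blast
    have "(p a - p c) \<bullet> (q' a - q' c) = 0"
      using q ab bc by (simp add: q'_def first_order_motion_def E2_def)
    then have "k * ((p a - p c) \<bullet> (m a - m c)) = 0" by (simp add: k scaleR_diff_right[symmetric])
    with s have "k = 0" by simp
    then have "\<And>v. q' v = 0" by (simp add: k)
    then show "q = (\<lambda>_. 0)"
    proof -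
      assume h: "\<And>v. q' v = 0"
      show ?thesis
      proof
        fix v show "q v = 0"
        proof (cases "v = b")
          case True then show ?thesis using qb by simp
        next
          case False then show ?thesis using h[of v] by (simp add: q'_def)
        qed
      qed
    qed
  next
    define V where "V = I \<union> \<Union>E"
    have V: "finite V" "\<Union>E \<subseteq> V" "\<Union>E2 \<subseteq> V" "\<Union>E0 \<subseteq> V" "a \<in> V" "c \<in> V"
      using f(1,4) edges2_finite_Union[OF f(4,5)] eab ebc by (auto simp: V_def E2_def E0_def)
    show "independent_fw I2 P E2 p"
      unfolding independent_fw_def
    proof (intro allI impI)
      fix lam assume st: "self_stress I2 P E2 p lam"
      define m2 where "m2 = m(b := 0)"
      have m2z: "v \<notin> I2 \<Longrightarrow> m2 v = 0" for v using mot by (auto simp: m2_def I2_def first_order_motion_def)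
      have m2mot: "first_order_motion I2 P E0 p m2"
        unfolding first_order_motion_def
      proof (intro conjI allI impI)
        fix v assume "v \<notin> I2" then show "m2 v = 0" by (rule m2z)
      next
        fix i j assume ij: "{i,j} \<in> E0"
        then have "i \<noteq> b" "j \<noteq> b" "{i,j} \<in> E" by (auto simp: E0_def)
        then show "(p i - p j) \<bullet> (m2 i - m2 j) = 0" using mot by (simp add: m2_def first_order_motion_def)
      qed
      have "(\<Sum>e\<in>E2. lam e * strV V p m2 e) = 0"
        by (rule vw_zero[OF V(1,3) E2fin st m2z])
      moreover have "(\<Sum>e\<in>E0. lam e * strV V p m2 e) = 0"
        by (intro sum.neutral ballI) (simp add: motion_strV_zero[OF m2mot _ E0e V(1,4)])
      moreover have "{a,c} \<notin> E0" using notac by (simp add: E0_def)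
      ultimately have "lam {a,c} * strV V p m2 {a,c} = 0" using f(4) by (simp add: E2_def E0_def)
      moreover have "strV V p m2 {a,c} = (p a - p c) \<bullet> (m a - m c)"
        using str_pair[OF V(1,5,6) ac] ab bc by (simp add: m2_def)
      ultimately have lac: "lam {a,c} = 0" using s by simp
      define mu where "mu e = (if e \<in> E0 then lam e else 0)" for e
      have "self_stress I P E p mu"
        unfolding self_stress_def
      proof
        fix i assume i: "i \<in> I"
        show "(\<Sum>j\<in>{j. {i, j} \<in> E}. mu {i, j} *\<^sub>R (p i - p j)) = 0"
        proof (cases "i = b")
          case True
          then show ?thesis by (intro sum.neutral) (auto simp: mu_def E0_def)
        next
          case False
          have "frc E p mu i = frc E2 p lam i"
          proof (rule frc_transfer[OF V(1,2,3)])
            fix j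
            show "(if {i, j} \<in> E then mu {i, j} *\<^sub>R (p i - p j) else 0) =
                  (if {i, j} \<in> E2 then lam {i, j} *\<^sub>R (p i - p j) else 0)"
            proof (cases "{i,j} = {a,c}")
              case True then show ?thesis using notac lac by (simp add: E2_def)
            next
              case F: False
              then have iff: "({i,j} \<in> E2) = ({i,j} \<in> E0)" by (simp add: E2_def)
              show ?thesis
              proof (cases "{i,j} \<in> E0")
                case True then show ?thesis using iff by (simp add: mu_def E0_def)
              next
                case False then show ?thesis using iff by (simp add: mu_def)
              qed
            qed
          qed
          moreover have "i \<in> I2" using i False by (simp add: I2_def)
          ultimately show ?thesis using st by (simp add: frc_def self_stress_def)
        qed
      qed
      then have "\<forall>e\<in>E. mu e = 0" using indep by (simp add: independent_fw_def)
      then show "\<forall>e\<in>E2. lam e = 0" using lac by (auto simp: mu_def E2_def E0_def)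
    qed
  qed
  moreover have "pinned_isostatic_graph I2 P E2"
    by (rule iso_count[OF _ f(2) _ E2fin E2e iso]) (use f in \<open>auto simp: I2_def\<close>)
  ultimately show ?thesis by (simp add: I2_def E2_def E0_def)
qed

lemma pin_case:
  assumes pg: "pinned_graph I P E" and a: "a \<in> I" and qi: "qi \<in> P" and qj: "qj \<in> P"
    and eaq: "{a,qi} \<in> E"
    and indep: "independent_fw I P E p" and mot: "first_order_motion I P E p m"
    and ms: "\<forall>q. first_order_motion I P E p q \<longrightarrow> (\<exists>k::real. q = (\<lambda>v. k *\<^sub>R m v))"
    and s: "(p a - p qj) \<bullet> (m a - m qj) \<noteq> 0"
  shows "isostatic_fw (I - {a}) (insert a P) {e\<in>E. \<not> e \<subseteq> insert a P} p \<and>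
         pinned_isostatic_graph (I - {a}) (insert a P) {e\<in>E. \<not> e \<subseteq> insert a P}"
proof -
  note f = pg_facts[OF pg]
  define E2 where "E2 = {e\<in>E. \<not> e \<subseteq> insert a P}"
  define I2 where "I2 = I - {a}"
  have qiI: "qi \<notin> I" "qj \<notin> I" using f(3) qi qj by auto
  have mqi: "m qi = 0" "m qj = 0" using mot qiI by (auto simp: first_order_motion_def)
  have ma: "m a \<noteq> 0" using s mqi by auto
  have aqi: "a \<noteq> qi" using a qiI by auto
  have E2fin: "finite E2" using f(4) by (simp add: E2_def)
  have E2e: "edges2 E2" using f(5) unfolding edges2_def E2_def by blast
  have E2sub: "E2 \<subseteq> E" by (auto simp: E2_def)
  have iso: "isostatic_fw I2 (insert a P) E2 p"
    unfolding isostatic_fw_def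
  proof (intro conjI allI impI)
    fix q assume q: "first_order_motion I2 (insert a P) E2 p q"
    have qz: "v \<notin> I2 \<Longrightarrow> q v = 0" for v using q by (simp add: first_order_motion_def)
    have "first_order_motion I P E p q"
      unfolding first_order_motion_def
    proof (intro conjI allI impI)
      fix v assume "v \<notin> I" then show "q v = 0" using qz by (simp add: I2_def)
    next
      fix i j assume ij: "{i,j} \<in> E"
      show "(p i - p j) \<bullet> (q i - q j) = 0"
      proof (cases "{i,j} \<in> E2")
        case True then show ?thesis using q by (simp add: first_order_motion_def)
      next
        case False
        then have "i \<in> insert a P" "j \<in> insert a P" using ij by (auto simp: E2_def)
        then have "i \<notin> I2" "j \<notin> I2" using f(3) by (auto simp: I2_def)
        then show ?thesis using qz by simp
      qed
    qed
    then obtain k where k: "q = (\<lambda>v. k *\<^sub>R m v)" using ms by blast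
    have "q a = 0" using qz by (simp add: I2_def)
    then have "k = 0" using ma by (simp add: k)
    then show "q = (\<lambda>_. 0)" by (simp add: k)
  next
    define V where "V = I \<union> \<Union>E"
    have V: "finite V" "\<Union>E \<subseteq> V" "\<Union>E2 \<subseteq> V" "a \<in> V" "qi \<in> V"
      using f(1,4) edges2_finite_Union[OF f(4,5)] eaq a by (auto simp: V_def E2_def)
    show "independent_fw I2 (insert a P) E2 p"
      unfolding independent_fw_def
    proof (intro allI impI)
      fix lam assume st: "self_stress I2 (insert a P) E2 p lam"
      define F where "F = frc E2 p lam a"
      have mot2: "first_order_motion I P E2 p m" using mot E2sub by (auto simp: first_order_motion_def)
      have "(\<Sum>e\<in>E2. lam e * strV V p m e) = (\<Sum>v\<in>V. m v \<bullet> frc E2 p lam v)"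
        by (rule virtual_work[OF V(1,3) E2fin])
      moreover have "(\<Sum>e\<in>E2. lam e * strV V p m e) = 0"
        by (intro sum.neutral ballI) (simp add: motion_strV_zero[OF mot2 _ E2e V(1,3)])
      moreover have "(\<Sum>v\<in>V. m v \<bullet> frc E2 p lam v) = m a \<bullet> F"
      proof -
        have "(\<Sum>v\<in>V. m v \<bullet> frc E2 p lam v) = m a \<bullet> frc E2 p lam a + (\<Sum>v\<in>V - {a}. m v \<bullet> frc E2 p lam v)"
          using V(1,4) by (simp add: sum.remove)
        also have "(\<Sum>v\<in>V - {a}. m v \<bullet> frc E2 p lam v) = 0"
        proof (intro sum.neutral ballI)
          fix v assume v: "v \<in> V - {a}"
          show "m v \<bullet> frc E2 p lam v = 0"
          proof (cases "v \<in> I")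
            case True
            then have "v \<in> I2" using v by (simp add: I2_def)
            then show ?thesis using st by (simp add: self_stress_def frc_def)
          next
            case False then show ?thesis using mot by (simp add: first_order_motion_def)
          qed
        qed
        finally show ?thesis by (simp add: F_def)
      qed
      ultimately have mF: "m a \<bullet> F = 0" by simp
      define u where "u = p a - p qi"
      have "(p a - p qi) \<bullet> (m a - m qi) = 0" using mot eaq by (simp add: first_order_motion_def)
      then have mu0: "m a \<bullet> u = 0" using mqi by (simp add: u_def inner_commute)
      have u0: "u \<noteq> 0" using indep_edge_pos[OF indep eaq aqi] by (simp add: u_def)
      define t where "t = (F \<bullet> u) / (u \<bullet> u)"
      have Ft: "F = t *\<^sub>R u" using parallel2[OF ma mF mu0 u0] by (simp add: t_def)
      have aqiE2: "{a,qi} \<notin> E2" using qi by (auto simp: E2_def)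
      define mu where "mu e = (if e \<in> E2 then lam e else if e = {a,qi} then - t else 0)" for e
      have "self_stress I P E p mu"
        unfolding self_stress_def
      proof
        fix i assume i: "i \<in> I"
        show "(\<Sum>j\<in>{j. {i, j} \<in> E}. mu {i, j} *\<^sub>R (p i - p j)) = 0"
        proof (cases "i = a")
          case True
          have "frc E p mu a = (\<Sum>j\<in>V. (if {a,j} \<in> E2 then lam {a,j} *\<^sub>R (p a - p j) else 0)
                                 + (if j = qi then (- t) *\<^sub>R (p a - p qi) else 0))"
          proof -
            have "frc E p mu a = (\<Sum>j\<in>V. if {a,j} \<in> E then mu {a,j} *\<^sub>R (p a - p j) else 0)"
              by (rule frc_V[OF V(1,2)])
            also have "\<dots> = (\<Sum>j\<in>V. (if {a,j} \<in> E2 then lam {a,j} *\<^sub>R (p a - p j) else 0)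
                                 + (if j = qi then (- t) *\<^sub>R (p a - p qi) else 0))"
            proof (rule sum.cong[OF refl])
              fix j assume "j \<in> V"
              have jq: "{a,j} = {a,qi} \<longleftrightarrow> j = qi" using aqi by (auto simp: doubleton_eq_iff)
              show "(if {a,j} \<in> E then mu {a,j} *\<^sub>R (p a - p j) else 0) =
                    (if {a,j} \<in> E2 then lam {a,j} *\<^sub>R (p a - p j) else 0)
                                 + (if j = qi then (- t) *\<^sub>R (p a - p qi) else 0)"
              proof (cases "j = qi")
                case True then show ?thesis using eaq aqiE2 by (simp add: mu_def)
              next
                case False
                then have "{a,j} \<noteq> {a,qi}" using jq by simp
                then show ?thesis using False E2sub by (auto simp: mu_def)
              qed
            qed
            finally show ?thesis .
          qed
          also have "\<dots> = F + (- t) *\<^sub>R u"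
            using V(1,5) by (simp add: sum.distrib frc_V[OF V(1,3), symmetric] F_def u_def)
          also have "\<dots> = 0" by (simp add: Ft)
          finally show ?thesis using True by (simp add: frc_def)
        next
          case False
          have iP: "i \<notin> insert a P" using False i f(3) by auto
          have "frc E p mu i = frc E2 p lam i"
          proof (rule frc_transfer[OF V(1,2,3)])
            fix j
            have "{i,j} \<noteq> {a,qi}" using False iP qi by (auto simp: doubleton_eq_iff)
            moreover have "({i,j} \<in> E2) = ({i,j} \<in> E)" using iP by (auto simp: E2_def)
            ultimately show "(if {i, j} \<in> E then mu {i, j} *\<^sub>R (p i - p j) else 0) =
                  (if {i, j} \<in> E2 then lam {i, j} *\<^sub>R (p i - p j) else 0)"
              by (simp add: mu_def)
          qed
          moreover have "i \<in> I2" using i False by (simp add: I2_def)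
          ultimately show ?thesis using st by (simp add: frc_def self_stress_def)
        qed
      qed
      then have "\<forall>e\<in>E. mu e = 0" using indep by (simp add: independent_fw_def)
      then show "\<forall>e\<in>E2. lam e = 0"
      proof (intro ballI)
        fix e assume h: "\<forall>e\<in>E. mu e = 0" and e: "e \<in> E2"
        then have "mu e = 0" using E2sub by blast
        then show "lam e = 0" using e by (simp add: mu_def)
      qed
    qed
  qed
  moreover have "pinned_isostatic_graph I2 (insert a P) E2"
    by (rule iso_count[OF _ _ _ E2fin E2e iso]) (use f in \<open>auto simp: I2_def\<close>)
  ultimately show ?thesis by (simp add: I2_def E2_def)
qed

theorem mainTheorem4:
  fixes I P :: "'v set" and E :: "'v set set" and p :: "'v config" and d :: "'v driver"
  assumes "pinned_graph I P E"
    and "independent_1dof_linkage I P E p"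
    and "is_driver I P E d"
    and "active_driver I P E p d"
  shows "case driver_replacement I P E d of (I', P', E') \<Rightarrow>
           isostatic_fw I' P' E' p \<and> pinned_isostatic_graph I' P' E'"
proof -
  note pg = assms(1)
  note f = pg_facts[OF pg]
  have indep: "independent_fw I P E p" using assms(2) by (simp add: independent_1dof_linkage_def)
  obtain m where mot: "first_order_motion I P E p m"
    and ms: "\<forall>q. first_order_motion I P E p q \<longrightarrow> (\<exists>c::real. q = (\<lambda>v. c *\<^sub>R m v))"
    using assms(2) by (auto simp: independent_1dof_linkage_def one_dof_def)
  show ?thesis
  proof (cases d)
    case (Piston a b)
    have s: "(p a - p b) \<bullet> (m a - m b) \<noteq> 0"
      by (rule active_m[OF ms assms(4)]) (simp add: Piston)
    have "a \<noteq> b" "a \<in> I \<union> P" "b \<in> I \<union> P" using assms(3) by (simp_all add: Piston)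
    from add_bar_full[OF pg this indep mot ms s] show ?thesis by (simp add: Piston)
  next
    case (AngleDriver a b c)
    have s: "(p a - p c) \<bullet> (m a - m c) \<noteq> 0"
      by (rule active_m[OF ms assms(4)]) (simp add: AngleDriver)
    have dr: "b \<in> I" "{a,b} \<in> E" "{b,c} \<in> E" "a \<noteq> c" using assms(3) by (simp_all add: AngleDriver)
    show ?thesis
    proof (cases "degree E b = 2")
      case True
      from deg2_case[OF pg dr True indep mot ms s] show ?thesis by (simp add: AngleDriver True)
    next
      case False
      have "a \<in> I \<union> P" "c \<in> I \<union> P" using f(6) dr by auto
      from add_bar_full[OF pg dr(4) this indep mot ms s] show ?thesis by (simp add: AngleDriver False)
    qed
  next
    case (PinAngleDriver a qi qj)
    have s: "(p a - p qj) \<bullet> (m a - m qj) \<noteq> 0"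
      by (rule active_m[OF ms assms(4)]) (simp add: PinAngleDriver)
    have dr: "a \<in> I" "qi \<in> P" "qj \<in> P" "{a,qi} \<in> E" using assms(3) by (simp_all add: PinAngleDriver)
    from pin_case[OF pg dr indep mot ms s] show ?thesis by (simp add: PinAngleDriver)
  qed
qed

end
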